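(* Let $m\ge 1$, and let $\ell_0,\ldots,\ell_{m-1}$ be $m$ distinct lines in the plane passing through a common point $x$, dividing the plane into $2m$ open sectors. Let $P=\{p_0,\ldots,p_{2m-1}\}$ consist of $2m$ points, one from each sector, listed in circular order around $x$. Then, among the $\binom{2m}{3}$ triangles with vertices in $P$, at least $\frac{(m+1)m(m-1)}{3}$ contain $x$. Moreover, if no two points of $P$ are collinear with $x$, exactly $\frac{(m+1)m(m-1)}{3}$ of them contain $x$.
   Context: A triangle with vertices in $P$ is the closed convex hull of a $3$-element subset of $P$. *)

theory Defs
  imports "HOL-Analysis.Analysis"
begin

definition line_through :: "real^2 \<Rightarrow> (real^2) set \<Rightarrow> bool" where
  "line_through x l \<longleftrightarrow> (\<exists>d. d \<noteq> 0 \<and> l = range (\<lambda>t. x + t *\<^sub>R d))"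

definition triangles_containing :: "(real^2) set \<Rightarrow> real^2 \<Rightarrow> (real^2) set set" where
  "triangles_containing P x = {T. T \<subseteq> P \<and> card T = 3 \<and> x \<in> convex hull T}"

end

theory Submission
  imports Defs
begin


definition crs :: "real^2 \<Rightarrow> real^2 \<Rightarrow> real" where
  "crs a b = a$1 * b$2 - a$2 * b$1"

definition rot :: "real^2 \<Rightarrow> real^2" where
  "rot a = vector [-(a$2), a$1]"

lemma crs_add[simp]: "crs a (b + c) = crs a b + crs a c"
  and crs_diff[simp]: "crs a (b - c) = crs a b - crs a c"
  and crs_scale[simp]: "crs a (t *\<^sub>R b) = t * crs a b"
  and crs_scale1[simp]: "crs (t *\<^sub>R a) b = t * crs a b"
  and crs_neg[simp]: "crs a (- b) = - crs a b"
  and crs_neg1[simp]: "crs (- a) b = - crs a b"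
  and crs_self[simp]: "crs a a = 0"
  and crs_zero[simp]: "crs a 0 = 0"
  by (auto simp: crs_def algebra_simps)

lemma crs_swap: "crs b a = - crs a b"
  by (simp add: crs_def)

lemma nz2: "(u::real^2) \<noteq> 0 \<longleftrightarrow> u$1 \<noteq> 0 \<or> u$2 \<noteq> 0"
  by (auto simp: vec_eq_iff forall_2)

lemma crs_inner: "crs a v = inner (rot a) v"
  by (simp add: crs_def rot_def inner_vec_def sum_2)

lemma rot_nz: "a \<noteq> 0 \<Longrightarrow> rot a \<noteq> 0"
  by (auto simp: nz2 rot_def)

lemma crs_rot_pos: "a \<noteq> 0 \<Longrightarrow> 0 < crs a (rot a)"
  by (auto simp: nz2 crs_def rot_def) (simp_all add: add_pos_nonneg add_nonneg_pos flip: power2_eq_square)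

lemma crs_par: assumes "u \<noteq> 0" "crs u y = 0" shows "\<exists>t. y = t *\<^sub>R u"
proof (cases "u$1 = 0")
  case True
  hence u2: "u$2 \<noteq> 0" using assms(1) by (simp add: nz2)
  show ?thesis
    by (rule exI[of _ "y$2 / u$2"]) (use assms(2) True u2 in \<open>auto simp: vec_eq_iff forall_2 crs_def field_simps\<close>)
next
  case False
  show ?thesis
    by (rule exI[of _ "y$1 / u$1"]) (use assms(2) False in \<open>auto simp: vec_eq_iff forall_2 crs_def field_simps\<close>)
qed

lemma crs_common: assumes "y \<noteq> 0" "crs a y = 0" "crs b y = 0" shows "crs a b = 0"
proof -
  obtain t where "a = t *\<^sub>R y" using crs_par[of y a] assms by (metis crs_swap neg_equal_0_iff_equal)
  moreover obtain s where "b = s *\<^sub>R y" using crs_par[of y b] assms by (metis crs_swap neg_equal_0_iff_equal)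
  ultimately show ?thesis by simp
qed

lemma crs_ident: "crs b c *\<^sub>R a + crs c a *\<^sub>R b + crs a b *\<^sub>R c = 0"
  by (simp add: vec_eq_iff forall_2 crs_def algebra_simps)


lemma sign_comb:
  fixes a b t :: real
  assumes "a \<noteq> 0" "b \<noteq> 0" "(0 < a) = (0 < b)" "0 \<le> t" "t \<le> 1"
  shows "(1 - t) * a + t * b \<noteq> 0 \<and> (0 < (1 - t) * a + t * b) = (0 < a)"
proof (cases "0 < a")
  case True
  hence "0 < b" using assms by simp
  have "0 < (1 - t) * a + t * b"
  proof (cases "t = 1")
    case False
    hence "0 < (1 - t) * a" using True assms by simp
    moreover have "0 \<le> t * b" using \<open>0<b\<close> assms by simp
    ultimately show ?thesis by linarith
  qed (use \<open>0<b\<close> in simp)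
  thus ?thesis using True by simp
next
  case False
  hence a: "a < 0" "b < 0" using assms by auto
  have "(1 - t) * a + t * b < 0"
  proof (cases "t = 1")
    case False
    hence "(1 - t) * a < 0" using a assms by (simp add: mult_pos_neg)
    moreover have "t * b \<le> 0" using a assms by (simp add: mult_nonneg_nonpos)
    ultimately show ?thesis by linarith
  qed (use a in simp)
  thus ?thesis using False by simp
qed

locale arr =
  fixes x :: "real^2" and L :: "(real^2) set set" and d :: "(real^2) set \<Rightarrow> real^2"
  assumes finL: "finite L" and Lne: "L \<noteq> {}" and dnz: "\<And>l. l \<in> L \<Longrightarrow> d l \<noteq> 0"
    and lineq: "\<And>l. l \<in> L \<Longrightarrow> l = {v. crs (d l) (v - x) = 0}"
begin

definition S where "S = {v. \<forall>l\<in>L. crs (d l) (v - x) \<noteq> 0}"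
definition sg where "sg v = restrict (\<lambda>l. 0 < crs (d l) (v - x)) L"
definition adm where "adm u \<longleftrightarrow> (\<forall>l\<in>L. crs (d l) u \<noteq> 0)"
definition Rp where "Rp u = sg ` {v\<in>S. 0 < crs u (v - x)}"

lemma S_compl: "- (\<Union>L) = S"
proof -
  have "v \<in> \<Union>L \<longleftrightarrow> (\<exists>l\<in>L. crs (d l) (v - x) = 0)" for v
  proof
    assume "v \<in> \<Union>L"
    then obtain l where "l \<in> L" "v \<in> l" by blast
    thus "\<exists>l\<in>L. crs (d l) (v - x) = 0" using lineq[of l] by blast
  next
    assume "\<exists>l\<in>L. crs (d l) (v - x) = 0"
    then obtain l where "l \<in> L" "crs (d l) (v - x) = 0" by blast
    thus "v \<in> \<Union>L" using lineq[of l] by blast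
  qed
  thus ?thesis unfolding S_def by auto
qed

lemma S_open: "open S"
proof -
  have "S = (\<Inter>l\<in>L. {v. crs (d l) (v - x) \<noteq> 0})" unfolding S_def by auto
  moreover have "open {v. crs (d l) (v - x) \<noteq> 0}" for l
    by (simp add: crs_inner inner_diff_right, intro open_Collect_neq continuous_intros)
  ultimately show ?thesis using finL by auto
qed

lemma adm_nz: "adm u \<Longrightarrow> u \<noteq> 0"
  using Lne by (auto simp: adm_def)

lemma adm_neg: "adm u \<Longrightarrow> adm (- u)"
  by (simp add: adm_def)

lemma adm_S: "v \<in> S \<Longrightarrow> adm (v - x)"
  by (simp add: adm_def S_def)

lemma seg_sg:
  assumes v: "v \<in> S" and w: "w \<in> S" and eq: "sg v = sg w" and z: "z \<in> closed_segment v w"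
  shows "z \<in> S \<and> sg z = sg v"
proof -
  obtain t where t: "0 \<le> t" "t \<le> 1" "z = (1 - t) *\<^sub>R v + t *\<^sub>R w"
    using z by (auto simp: closed_segment_def)
  have zx: "z - x = (1 - t) *\<^sub>R (v - x) + t *\<^sub>R (w - x)"
    using t(3) by (simp add: algebra_simps)
  have *: "crs (d l) (z - x) \<noteq> 0 \<and> (0 < crs (d l) (z - x)) = (0 < crs (d l) (v - x))" if l: "l \<in> L" for l
  proof -
    have "sg v l = sg w l" using eq by simp
    hence e: "(0 < crs (d l) (v - x)) = (0 < crs (d l) (w - x))"
      using l unfolding sg_def by simp
    have n: "crs (d l) (v - x) \<noteq> 0" "crs (d l) (w - x) \<noteq> 0" using v w l unfolding S_def by auto
    have "crs (d l) (z - x) = (1 - t) * crs (d l) (v - x) + t * crs (d l) (w - x)"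
      unfolding zx by simp
    thus ?thesis using sign_comb[OF n e t(1,2)] by simp
  qed
  have "z \<in> S" using * unfolding S_def by blast
  moreover have "sg z = sg v" unfolding sg_def
    by (rule restrict_ext) (use * in blast)
  ultimately show ?thesis by blast
qed

lemma crs_inner_x: "crs a (w - x) = inner (rot a) w - inner (rot a) x"
  by (simp only: crs_inner inner_diff_right)

lemma cc: assumes v: "v \<in> S" shows "connected_component_set S v = {w\<in>S. sg w = sg v}"
proof (rule set_eqI, rule iffI)
  fix w assume w: "w \<in> connected_component_set S v"
  have wS: "w \<in> S" using w connected_component_subset[of S v] by (simp add: subset_iff)
  show "w \<in> {w\<in>S. sg w = sg v}"
  proof (rule ccontr)
    assume "w \<notin> {w\<in>S. sg w = sg v}"
    hence "sg w \<noteq> sg v" using wS by simp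
    then obtain l where l0: "sg w l \<noteq> sg v l" by (auto simp: fun_eq_iff)
    hence lL: "l \<in> L" unfolding sg_def by (cases "l \<in> L") auto
    hence l: "l \<in> L" "(0 < crs (d l) (w - x)) \<noteq> (0 < crs (d l) (v - x))"
      using l0 unfolding sg_def by auto
    have nz: "crs (d l) (w - x) \<noteq> 0" "crs (d l) (v - x) \<noteq> 0" using l wS v by (auto simp: S_def)
    let ?C = "connected_component_set S v"
    have conn: "connected ?C" by (rule connected_connected_component)
    have vC: "v \<in> ?C" using v by (simp add: mem_Collect_eq)
    have iw: "crs (d l) (w - x) = inner (rot (d l)) w - inner (rot (d l)) x"
      and iv: "crs (d l) (v - x) = inner (rot (d l)) v - inner (rot (d l)) x"
      by (rule crs_inner_x)+
    have "\<exists>z\<in>?C. inner (rot (d l)) z = inner (rot (d l)) x"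
    proof (cases "0 < crs (d l) (v - x)")
      case True
      hence "crs (d l) (w - x) < 0" using l nz by auto
      hence "inner (rot (d l)) w \<le> inner (rot (d l)) x" "inner (rot (d l)) x \<le> inner (rot (d l)) v"
        using True iw iv by linarith+
      thus ?thesis by (rule connected_ivt_hyperplane[OF conn w vC])
    next
      case False
      hence "crs (d l) (v - x) < 0" "0 < crs (d l) (w - x)" using l nz by auto
      hence "inner (rot (d l)) v \<le> inner (rot (d l)) x" "inner (rot (d l)) x \<le> inner (rot (d l)) w"
        using iw iv by linarith+
      thus ?thesis by (rule connected_ivt_hyperplane[OF conn vC w])
    qed
    then obtain z where z: "z \<in> ?C" "inner (rot (d l)) z = inner (rot (d l)) x" by blast
    have "crs (d l) (z - x) = 0" using z(2) crs_inner_x[of "d l" z] by simp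
    moreover have "z \<in> S" using z(1) connected_component_subset[of S v] by (simp add: subset_iff)
    ultimately show False using l(1) unfolding S_def by blast
  qed
next
  fix w assume w: "w \<in> {w\<in>S. sg w = sg v}"
  have "closed_segment v w \<subseteq> S"
  proof
    fix z assume "z \<in> closed_segment v w"
    thus "z \<in> S" using seg_sg[OF v, of w z] w by simp
  qed
  hence "connected_component S v w"
    using connected_componentI[of "closed_segment v w" S v w] by auto
  thus "w \<in> connected_component_set S v" by simp
qed

lemma comps: "components S = (\<lambda>s. {w\<in>S. sg w = s}) ` (sg ` S)"
  unfolding components_def using cc by auto

lemma sg_fin: "finite (sg ` A)"
proof (rule finite_subset)
  show "sg ` A \<subseteq> PiE L (\<lambda>_. UNIV)" by (auto simp: sg_def)
  show "finite (PiE L (\<lambda>_. UNIV :: bool set))" using finL by (intro finite_PiE) auto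
qed

lemma sg_scale: assumes "0 < t" shows "sg (x + t *\<^sub>R w) = sg (x + w)"
  unfolding sg_def using assms by (auto intro!: restrict_ext simp: zero_less_mult_iff)

lemma S_scale: assumes "0 < t" shows "x + t *\<^sub>R w \<in> S \<longleftrightarrow> x + w \<in> S"
  unfolding S_def using assms by auto

end


lemma down_sets_card:
  fixes f :: "'a \<Rightarrow> real"
  assumes fin: "finite L" and ne: "L \<noteq> {}" and inj: "inj_on f L"
  shows "card ((\<lambda>t. {l\<in>L. f l < t}) ` {t. t \<notin> f ` L}) = card L + 1"
proof -
  define B where "B t = {l\<in>L. f l < t}" for t
  define Fam where "Fam = B ` {t. t \<notin> f ` L}"
  have finFam: "finite Fam"
    by (rule finite_subset[of _ "Pow L"]) (auto simp: Fam_def B_def fin)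
  have chain: "X \<subseteq> Y \<or> Y \<subseteq> X" if XY: "X \<in> Fam" "Y \<in> Fam" for X Y
  proof -
    obtain s t where "X = B s" "Y = B t" using XY unfolding Fam_def by blast
    thus ?thesis unfolding B_def by (cases "s \<le> t") auto
  qed
  have "inj_on card Fam"
  proof (rule inj_onI)
    fix X Y assume XY: "X \<in> Fam" "Y \<in> Fam" "card X = card Y"
    have fX: "finite X" "finite Y" using XY fin unfolding Fam_def B_def by auto
    from chain[OF XY(1,2)] show "X = Y"
      using card_subset_eq[OF fX(2)] card_subset_eq[OF fX(1)] XY(3) by metis
  qed
  hence "card Fam = card (card ` Fam)" by (simp add: card_image)
  also have "\<dots> \<le> card {0..card L}"
    by (rule card_mono) (auto simp: Fam_def B_def fin intro!: card_mono)
  finally have le: "card Fam \<le> card L + 1" by simp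
  define Dn where "Dn l = {l'\<in>L. f l' \<le> f l}" for l
  define \<Delta> where "\<Delta> = {f a - f b | a b. a \<in> L \<and> b \<in> L \<and> f b < f a}"
  have finD: "finite \<Delta>"
  proof -
    have "\<Delta> = (\<lambda>(a,b). f a - f b) ` {(a,b). a \<in> L \<and> b \<in> L \<and> f b < f a}"
      unfolding \<Delta>_def by auto
    moreover have "finite {(a,b). a \<in> L \<and> b \<in> L \<and> f b < f a}"
      by (rule finite_subset[of _ "L \<times> L"]) (auto simp: fin)
    ultimately show ?thesis by simp
  qed
  define \<delta> where "\<delta> = (if \<Delta> = {} then 1 else Min \<Delta>) / 2"
  have dpos: "\<delta> > 0"
  proof (cases "\<Delta> = {}")
    case False
    hence "Min \<Delta> \<in> \<Delta>" using finD by simp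
    hence "Min \<Delta> > 0" unfolding \<Delta>_def by auto
    thus ?thesis using False by (simp add: \<delta>_def)
  qed (simp add: \<delta>_def)
  have dlt: "\<delta> < z" if "z \<in> \<Delta>" for z
  proof -
    have ne: "\<Delta> \<noteq> {}" using that by auto
    have "Min \<Delta> \<le> z" using finD that by simp
    moreover have "Min \<Delta> \<in> \<Delta>" using finD ne by simp
    hence "Min \<Delta> > 0" unfolding \<Delta>_def by auto
    ultimately show ?thesis using ne by (simp add: \<delta>_def)
  qed
  have DnB: "Dn l \<in> Fam" if l: "l \<in> L" for l
  proof -
    have nin: "f l + \<delta> \<notin> f ` L"
    proof
      assume "f l + \<delta> \<in> f ` L"
      then obtain a where a: "a \<in> L" "f a = f l + \<delta>" by auto
      hence "f a - f l \<in> \<Delta>" using l dpos unfolding \<Delta>_def by force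
      thus False using dlt a by fastforce
    qed
    have "Dn l = B (f l + \<delta>)"
    proof -
      have "f l' < f l + \<delta> \<longleftrightarrow> f l' \<le> f l" if "l' \<in> L" for l'
      proof
        assume h: "f l' < f l + \<delta>"
        show "f l' \<le> f l"
        proof (rule ccontr)
          assume "\<not> f l' \<le> f l"
          hence "f l' - f l \<in> \<Delta>" using l that unfolding \<Delta>_def by force
          thus False using dlt h by fastforce
        qed
      qed (use dpos in auto)
      thus ?thesis unfolding Dn_def B_def by auto
    qed
    thus ?thesis using nin unfolding Fam_def by auto
  qed
  have emp: "{} \<in> Fam"
  proof -
    have fm: "finite (f ` L)" "f ` L \<noteq> {}" using fin ne by auto
    have "Min (f ` L) - 1 \<notin> f ` L" using Min_le[OF fm(1)] by force
    moreover have "B (Min (f ` L) - 1) = {}" unfolding B_def using Min_le[OF fm(1)] by force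
    ultimately show ?thesis unfolding Fam_def by force
  qed
  have injD: "inj_on Dn L"
  proof (rule inj_onI)
    fix a b assume ab: "a \<in> L" "b \<in> L" "Dn a = Dn b"
    hence "a \<in> Dn b" "b \<in> Dn a" unfolding Dn_def by auto
    hence "f a = f b" unfolding Dn_def by auto
    thus "a = b" using inj ab unfolding inj_on_def by auto
  qed
  have "{} \<notin> Dn ` L" unfolding Dn_def by auto
  hence "card (insert {} (Dn ` L)) = card L + 1"
    using card_image[OF injD] fin by simp
  moreover have "card (insert {} (Dn ` L)) \<le> card Fam"
    by (rule card_mono[OF finFam]) (use DnB emp in auto)
  ultimately show ?thesis using le unfolding Fam_def B_def by simp
qed


lemma tournament_count:
  fixes P :: "'a set" and R :: "'a \<Rightarrow> 'a \<Rightarrow> bool"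
  assumes fin: "finite P"
    and tour: "\<And>p q. p \<in> P \<Longrightarrow> q \<in> P \<Longrightarrow> p \<noteq> q \<Longrightarrow> R p q \<longleftrightarrow> \<not> R q p"
  shows "card P choose 3 = card {T. T \<subseteq> P \<and> card T = 3 \<and> \<not>(\<exists>s\<in>T. \<forall>q\<in>T-{s}. R s q)}
     + (\<Sum>p\<in>P. card {q\<in>P. q \<noteq> p \<and> R p q} choose 2)"
proof -
  define Cyc where "Cyc = {T. T \<subseteq> P \<and> card T = 3 \<and> \<not>(\<exists>s\<in>T. \<forall>q\<in>T-{s}. R s q)}"
  define A where "A p = {T. T \<subseteq> P \<and> card T = 3 \<and> p \<in> T \<and> (\<forall>q\<in>T-{p}. R p q)}" for p
  define out where "out p = {q\<in>P. q \<noteq> p \<and> R p q}" for p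
  have finPow: "finite {T. T \<subseteq> P}" using fin by simp
  have trip: "{T. T \<subseteq> P \<and> card T = 3} = Cyc \<union> (\<Union>p\<in>P. A p)"
    unfolding Cyc_def A_def by blast
  have disj1: "Cyc \<inter> (\<Union>p\<in>P. A p) = {}" unfolding Cyc_def A_def by blast
  have finC: "finite Cyc" by (rule finite_subset[OF _ finPow]) (auto simp: Cyc_def)
  have finA: "finite (A p)" for p by (rule finite_subset[OF _ finPow]) (auto simp: A_def)
  have disjA: "A p \<inter> A q = {}" if "p \<in> P" "q \<in> P" "p \<noteq> q" for p q
    using tour[OF that] unfolding A_def by blast
  have cardA: "card (A p) = card (out p) choose 2" if p: "p \<in> P" for p
  proof -
    have "A p = insert p ` {B. B \<subseteq> out p \<and> card B = 2}"
    proof (rule set_eqI, rule iffI)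
      fix T assume T: "T \<in> A p"
      hence "T = insert p (T - {p})" unfolding A_def by blast
      moreover have "T - {p} \<subseteq> out p" using T unfolding A_def out_def by blast
      moreover have "card (T - {p}) = 2" using T unfolding A_def by auto
      ultimately show "T \<in> insert p ` {B. B \<subseteq> out p \<and> card B = 2}" by blast
    next
      fix T assume "T \<in> insert p ` {B. B \<subseteq> out p \<and> card B = 2}"
      then obtain B where B: "B \<subseteq> out p" "card B = 2" "T = insert p B" by blast
      have "p \<notin> B" "finite B" using B(1) fin unfolding out_def by (auto intro: finite_subset)
      hence "card T = 3" using B by simp
      thus "T \<in> A p" using B p unfolding A_def out_def by auto
    qed
    moreover have "inj_on (insert p) {B. B \<subseteq> out p \<and> card B = 2}"
      unfolding inj_on_def out_def by blast
    ultimately have "card (A p) = card {B. B \<subseteq> out p \<and> card B = 2}" by (simp add: card_image)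
    also have "\<dots> = card (out p) choose 2" by (rule n_subsets) (simp add: out_def fin)
    finally show ?thesis .
  qed
  have "card P choose 3 = card {T. T \<subseteq> P \<and> card T = 3}" by (simp add: n_subsets fin)
  also have "\<dots> = card Cyc + card (\<Union>p\<in>P. A p)"
    unfolding trip by (rule card_Un_disjoint) (use finC finA fin disj1 in auto)
  also have "card (\<Union>p\<in>P. A p) = (\<Sum>p\<in>P. card (A p))"
    by (rule card_UN_disjoint) (use fin finA disjA in auto)
  also have "\<dots> = (\<Sum>p\<in>P. card (out p) choose 2)" by (rule sum.cong) (auto simp: cardA)
  finally show ?thesis unfolding Cyc_def out_def .
qed


declare crs_diff[simp del]

context arr begin

lemma lines_eq: assumes "l1 \<in> L" "l2 \<in> L" "crs (d l1) (d l2) = 0" shows "l1 = l2"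
proof -
  obtain s where s: "d l2 = s *\<^sub>R d l1" using crs_par[of "d l1" "d l2"] assms dnz by blast
  have "s \<noteq> 0" using s dnz[OF assms(2)] by auto
  hence eqs: "crs (d l2) y = 0 \<longleftrightarrow> crs (d l1) y = 0" for y using s by simp
  have "l1 = {v. crs (d l1) (v - x) = 0}" by (rule lineq[OF assms(1)])
  also have "\<dots> = {v. crs (d l2) (v - x) = 0}" using eqs by blast
  also have "\<dots> = l2" by (rule lineq[OF assms(2), symmetric])
  finally show ?thesis .
qed

lemma Rp_card: assumes adm: "adm u" shows "card (Rp u) = card L + 1"
proof -
  have u0: "u \<noteq> 0" using adm_nz[OF adm] .
  define w where "w = rot u"
  have c0: "0 < crs u w" unfolding w_def using crs_rot_pos[OF u0] .
  define tl where "tl l = - crs (d l) w / crs (d l) u" for l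
  define Kp where "Kp t = x + w + t *\<^sub>R u" for t
  have cnz: "crs (d l) u \<noteq> 0" if "l \<in> L" for l using adm that by (simp add: adm_def)
  have cK: "crs (d l) (Kp t - x) = crs (d l) u * (t - tl l)" if "l \<in> L" for l t
    using cnz[OF that] by (simp add: Kp_def tl_def field_simps)
  have KS0: "(crs (d l) (Kp t - x) \<noteq> 0) = (t \<noteq> tl l)" if "l \<in> L" for l t
    using cK[OF that] cnz[OF that] by (simp del: crs_diff)
  have KS: "Kp t \<in> S \<longleftrightarrow> t \<notin> tl ` L" for t
    unfolding S_def using KS0 by (auto simp del: crs_diff)
  have uK: "crs u (Kp t - x) = crs u w" for t by (simp add: Kp_def)
  define G where "G = {t. t \<notin> tl ` L}"
  have eq1: "Rp u = sg ` Kp ` G"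
  proof
    show "sg ` Kp ` G \<subseteq> Rp u" unfolding Rp_def G_def using KS uK c0 by auto
  next
    show "Rp u \<subseteq> sg ` Kp ` G"
    proof
      fix s assume "s \<in> Rp u"
      then obtain v where v: "v \<in> S" "0 < crs u (v - x)" "s = sg v" unfolding Rp_def by auto
      define lam where "lam = crs u w / crs u (v - x)"
      have lam: "0 < lam" using c0 v(2) by (simp add: lam_def)
      define z where "z = x + lam *\<^sub>R (v - x)"
      have "crs u (z - x - w) = 0" using v(2) by (simp add: z_def lam_def crs_diff)
      then obtain t where t: "z - x - w = t *\<^sub>R u" using crs_par[OF u0] by blast
      have zK: "z = Kp t" using t by (simp add: Kp_def algebra_simps)
      have "sg z = sg v" using sg_scale[OF lam, of "v - x"] by (simp add: z_def)
      moreover have "z \<in> S" using S_scale[OF lam, of "v - x"] v(1) by (simp add: z_def)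
      ultimately have "t \<in> G" "s = sg (Kp t)" using zK KS v(3) unfolding G_def by auto
      thus "s \<in> sg ` Kp ` G" by blast
    qed
  qed
  define B where "B t = {l\<in>L. tl l < t}" for t
  define F where "F X = restrict (\<lambda>l. (0 < crs (d l) u) = (l \<in> X)) L" for X
  have sgK: "sg (Kp t) = F (B t)" if t: "t \<in> G" for t
    unfolding sg_def F_def
  proof (rule restrict_ext)
    fix l assume l: "l \<in> L"
    have "t \<noteq> tl l" using t l unfolding G_def by auto
    hence "(0 < crs (d l) u * (t - tl l)) = ((0 < crs (d l) u) = (tl l < t))"
      using cnz[OF l] by (auto simp: zero_less_mult_iff)
    thus "(0 < crs (d l) (Kp t - x)) = ((0 < crs (d l) u) = (l \<in> B t))"
      using cK[OF l] l by (simp add: B_def)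
  qed
  have injF: "inj_on F (Pow L)"
  proof (rule inj_onI)
    fix X Y assume XY: "X \<in> Pow L" "Y \<in> Pow L" "F X = F Y"
    have "l \<in> X \<longleftrightarrow> l \<in> Y" if "l \<in> L" for l
    proof -
      have "F X l = F Y l" using XY by simp
      thus ?thesis using that by (simp add: F_def) blast
    qed
    thus "X = Y" using XY by auto
  qed
  have injtl: "inj_on tl L"
  proof (rule inj_onI)
    fix a b assume ab: "a \<in> L" "b \<in> L" "tl a = tl b"
    define y where "y = Kp (tl a) - x"
    have "crs u y = crs u w" using uK by (simp add: y_def)
    hence y0: "y \<noteq> 0" using c0 by auto
    have "crs (d a) y = 0" "crs (d b) y = 0" using cK ab by (simp_all add: y_def)
    hence "crs (d a) (d b) = 0" using crs_common[OF y0] by blast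
    thus "a = b" using lines_eq ab by blast
  qed
  have "Rp u = (\<lambda>t. sg (Kp t)) ` G" unfolding eq1 image_image ..
  also have "\<dots> = (\<lambda>t. F (B t)) ` G" by (rule image_cong) (simp_all add: sgK)
  also have "\<dots> = F ` B ` G" by (simp add: image_image)
  finally have "Rp u = F ` B ` G" .
  moreover have "B ` G \<subseteq> Pow L" unfolding B_def by auto
  ultimately have "card (Rp u) = card (B ` G)"
    using card_image[OF inj_on_subset[OF injF]] by simp
  also have "\<dots> = card L + 1" unfolding B_def G_def by (rule down_sets_card[OF finL Lne injtl])
  finally show ?thesis .
qed

lemma M_sg: assumes adm: "adm u" and v: "v \<in> S" and c: "crs u (v - x) = 0"
  shows "sg v = sg (x + u) \<or> sg v = sg (x - u)"
proof -
  obtain t where t: "v - x = t *\<^sub>R u" using crs_par[OF adm_nz[OF adm]] c by blast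
  obtain l where l: "l \<in> L" using Lne by blast
  have "t \<noteq> 0"
  proof
    assume "t = 0"
    hence "v = x" using t by simp
    thus False using v l by (simp add: S_def)
  qed
  show ?thesis
  proof (cases "0 < t")
    case True
    have "v = x + t *\<^sub>R u" using t by (simp add: algebra_simps)
    thus ?thesis using sg_scale[OF True, of u] by simp
  next
    case False
    hence tn: "0 < - t" using \<open>t \<noteq> 0\<close> by simp
    have "v = x + (- t) *\<^sub>R (- u)" using t by (simp add: algebra_simps)
    thus ?thesis using sg_scale[OF tn, of "- u"] by simp
  qed
qed

lemma M_Rp: assumes u0: "u \<noteq> 0" and v: "v \<in> S" and c: "crs u (v - x) = 0"
  shows "sg v \<in> Rp u"
proof -
  have "open (connected_component_set S v)" by (rule open_connected_component[OF S_open])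
  then obtain e where e: "0 < e" "ball v e \<subseteq> connected_component_set S v"
  proof -
    have "v \<in> connected_component_set S v" using v by simp
    thus ?thesis using \<open>open (connected_component_set S v)\<close> that open_contains_ball by blast
  qed
  define eps where "eps = e / (2 * (norm (rot u) + 1))"
  have "0 < 2 * (norm (rot u) + 1)" by (simp add: add_nonneg_pos)
  hence eps: "0 < eps" using e(1) unfolding eps_def by simp
  define z where "z = v + eps *\<^sub>R rot u"
  have "eps * norm (rot u) < e"
  proof -
    have "eps * norm (rot u) \<le> eps * (norm (rot u) + 1)" using eps by simp
    also have "\<dots> = e / 2"
    proof -
      have "norm (rot u) + 1 \<noteq> 0" using norm_ge_zero[of "rot u"] by linarith
      thus ?thesis unfolding eps_def by (simp add: field_simps)
    qed
    finally show ?thesis using e by simp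
  qed
  hence "dist v z < e" using eps by (simp add: z_def dist_norm)
  hence "z \<in> connected_component_set S v" using e by auto
  hence z: "z \<in> S" "sg z = sg v" using cc[OF v] by auto
  have zx: "z - x = (v - x) + eps *\<^sub>R rot u" by (simp add: z_def algebra_simps)
  have "crs u (z - x) = crs u (v - x) + eps * crs u (rot u)" by (simp only: zx crs_add crs_scale)
  hence "0 < crs u (z - x)"
    using c eps crs_rot_pos[OF u0] by simp
  hence "z \<in> {v \<in> S. 0 < crs u (v - x)}" using z by simp
  hence "sg z \<in> Rp u" unfolding Rp_def by (rule imageI)
  thus ?thesis using z by simp
qed

lemma Rp_inter: assumes adm: "adm u" shows "Rp u \<inter> Rp (- u) \<subseteq> {sg (x + u), sg (x - u)}"
proof
  fix s assume "s \<in> Rp u \<inter> Rp (- u)"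
  then obtain a b where a: "a \<in> S" "0 < crs u (a - x)" "s = sg a"
    and b: "b \<in> S" "0 < crs (- u) (b - x)" "s = sg b" unfolding Rp_def by auto
  let ?C = "connected_component_set S a"
  have bC: "b \<in> ?C" using cc[OF a(1)] a b by auto
  have aC: "a \<in> ?C" using a(1) by simp
  have "inner (rot u) b \<le> inner (rot u) x" "inner (rot u) x \<le> inner (rot u) a"
    using a(2) b(2) crs_inner_x[of u a] crs_inner_x[of u b] by auto
  then obtain z where z: "z \<in> ?C" "inner (rot u) z = inner (rot u) x"
    using connected_ivt_hyperplane[OF connected_connected_component bC aC] by blast
  have zS: "z \<in> S" "sg z = sg a" using z(1) cc[OF a(1)] by auto
  have "crs u (z - x) = 0" using z(2) crs_inner_x[of u z] by simp
  thus "s \<in> {sg (x + u), sg (x - u)}" using M_sg[OF adm zS(1)] zS a(3) by auto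
qed

lemma sgS: assumes adm: "adm u" shows "sg ` S = Rp u \<union> Rp (- u)"
proof
  show "Rp u \<union> Rp (- u) \<subseteq> sg ` S" unfolding Rp_def by auto
  show "sg ` S \<subseteq> Rp u \<union> Rp (- u)"
  proof
    fix s assume "s \<in> sg ` S"
    then obtain v where v: "v \<in> S" "s = sg v" by auto
    consider "0 < crs u (v - x)" | "crs u (v - x) < 0" | "crs u (v - x) = 0" by linarith
    thus "s \<in> Rp u \<union> Rp (- u)"
    proof cases
      case 1 thus ?thesis using v unfolding Rp_def by auto
    next
      case 2 thus ?thesis using v unfolding Rp_def by auto
    next
      case 3 thus ?thesis using v M_Rp[OF adm_nz[OF adm]] by auto
    qed
  qed
qed

lemma pm_S: assumes adm: "adm u" shows "x + u \<in> S" "x - u \<in> S"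
  using adm by (auto simp: S_def adm_def)

lemma pm_Rp: assumes adm: "adm u" shows "sg (x + u) \<in> Rp u" "sg (x - u) \<in> Rp u"
  using M_Rp[OF adm_nz[OF adm] pm_S(1)[OF adm]] M_Rp[OF adm_nz[OF adm] pm_S(2)[OF adm]] by simp_all

lemma pm_ne: assumes adm: "adm u" shows "sg (x + u) \<noteq> sg (x - u)"
proof
  obtain l where l: "l \<in> L" using Lne by blast
  assume "sg (x + u) = sg (x - u)"
  hence "sg (x + u) l = sg (x - u) l" by simp
  hence "(0 < crs (d l) u) = (0 < - crs (d l) u)" using l by (simp add: sg_def)
  thus False using adm l by (auto simp: adm_def)
qed

lemma N_card: assumes adm: "adm u" shows "card (sg ` S) = 2 * card L"
proof -
  have adm': "adm (- u)" using adm_neg[OF adm] .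
  have I: "Rp u \<inter> Rp (- u) = {sg (x + u), sg (x - u)}"
  proof
    show "Rp u \<inter> Rp (- u) \<subseteq> {sg (x + u), sg (x - u)}" by (rule Rp_inter[OF adm])
    show "{sg (x + u), sg (x - u)} \<subseteq> Rp u \<inter> Rp (- u)"
      using pm_Rp[OF adm] pm_Rp[OF adm'] by auto
  qed
  have "card (Rp u \<union> Rp (- u)) + card (Rp u \<inter> Rp (- u)) = card (Rp u) + card (Rp (- u))"
    using card_Un_Int[of "Rp u" "Rp (- u)"] by (simp add: Rp_def sg_fin)
  moreover have "card (Rp u \<inter> Rp (- u)) = 2" unfolding I using pm_ne[OF adm] by simp
  ultimately show ?thesis using Rp_card[OF adm] Rp_card[OF adm'] sgS[OF adm] by simp
qed

lemma P_bij: assumes PS: "P \<subseteq> S" and PC: "\<forall>C\<in>components S. card (P \<inter> C) = 1"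
  shows "bij_betw sg P (sg ` S)"
proof -
  have C1: "card (P \<inter> {w\<in>S. sg w = sg v}) = 1" if "v \<in> S" for v
    using PC that unfolding comps by auto
  have "inj_on sg P"
  proof (rule inj_onI)
    fix p q assume pq: "p \<in> P" "q \<in> P" "sg p = sg q"
    have "p \<in> P \<inter> {w\<in>S. sg w = sg p}" "q \<in> P \<inter> {w\<in>S. sg w = sg p}" using pq PS by auto
    moreover obtain a where "P \<inter> {w\<in>S. sg w = sg p} = {a}" using C1[of p] pq PS card_1_singletonE by blast
    ultimately have "p = a" "q = a" by auto
    thus "p = q" by simp
  qed
  moreover have "sg ` P = sg ` S"
  proof
    show "sg ` P \<subseteq> sg ` S" using PS by auto
    show "sg ` S \<subseteq> sg ` P"
    proof
      fix s assume "s \<in> sg ` S"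
      then obtain v where v: "v \<in> S" "s = sg v" by auto
      have "P \<inter> {w\<in>S. sg w = sg v} \<noteq> {}" using C1[OF v(1)] by auto
      then obtain p where "p \<in> P" "sg p = sg v" by blast
      thus "s \<in> sg ` P" using v by (metis image_eqI)
    qed
  qed
  ultimately show ?thesis by (simp add: bij_betw_def)
qed

lemma deg: assumes adm: "adm u" and PS: "P \<subseteq> S" and bij: "bij_betw sg P (sg ` S)"
  shows "card L - 1 \<le> card {q\<in>P. 0 < crs u (q - x)}"
proof -
  have finP: "finite P" using bij sg_fin bij_betw_finite by blast
  define A where "A = Rp u - {sg (x + u), sg (x - u)}"
  have "card A = card (Rp u) - 2"
    unfolding A_def using pm_Rp[OF adm] pm_ne[OF adm] by (simp add: card_Diff_subset Rp_def sg_fin)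
  hence cA: "card A = card L - 1" using Rp_card[OF adm] by simp
  have sP: "sg ` P = sg ` S" using bij by (simp add: bij_betw_def)
  have AP: "A \<subseteq> sg ` P" unfolding A_def Rp_def sP by auto
  define g where "g = inv_into P sg"
  have gin: "g s \<in> {q\<in>P. 0 < crs u (q - x)}" if s: "s \<in> A" for s
  proof -
    have q: "g s \<in> P" "sg (g s) = s" using AP s by (auto simp: g_def inv_into_into f_inv_into_f)
    have qS: "g s \<in> S" using q PS by auto
    have "\<not> crs u (g s - x) \<le> 0"
    proof
      assume le: "crs u (g s - x) \<le> 0"
      show False
      proof (cases "crs u (g s - x) = 0")
        case True
        thus False using M_sg[OF adm qS] q s unfolding A_def by auto
      next
        case False
        hence "s \<in> Rp (- u)" using le q qS unfolding Rp_def by force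
        thus False using Rp_inter[OF adm] s unfolding A_def by auto
      qed
    qed
    thus ?thesis using q by auto
  qed
  have "inj_on g A" unfolding g_def by (rule inj_on_inv_into[OF AP])
  hence "card A \<le> card {q\<in>P. 0 < crs u (q - x)}"
    by (rule card_inj_on_le) (use gin finP in auto)
  thus ?thesis using cA by simp
qed

end


declare crs_diff[simp del]

lemma choose2_real: "real (n choose 2) = real n * (real n - 1) / 2"
proof (induction n)
  case (Suc n)
  have "Suc n choose 2 = n + (n choose 2)"
    using binomial_Suc_Suc[of n 1] by (simp add: numeral_2_eq_2)
  thus ?case using Suc by (simp add: field_simps)
qed simp

lemma choose3_real: "real (n choose 3) = real n * (real n - 1) * (real n - 2) / 6"
proof (induction n)
  case (Suc n)
  have "Suc n choose 3 = (n choose 2) + (n choose 3)"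
    using binomial_Suc_Suc[of n 2] by (simp add: numeral_3_eq_3 numeral_2_eq_2)
  thus ?case using Suc choose2_real[of n] by (simp add: field_simps)
qed simp

lemma hull_from_crs:
  fixes a b c x :: "real^2"
  assumes h: "0 \<le> crs (a-x) (b-x)" "0 \<le> crs (b-x) (c-x)" "0 \<le> crs (c-x) (a-x)"
    and s: "0 < crs (a-x) (b-x) + crs (b-x) (c-x) + crs (c-x) (a-x)"
  shows "x \<in> convex hull {a,b,c}"
proof -
  define \<sigma> where "\<sigma> = crs (a-x) (b-x) + crs (b-x) (c-x) + crs (c-x) (a-x)"
  define \<alpha> where "\<alpha> = crs (b-x) (c-x) / \<sigma>"
  define \<beta> where "\<beta> = crs (c-x) (a-x) / \<sigma>"
  define \<gamma> where "\<gamma> = crs (a-x) (b-x) / \<sigma>"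
  have sp: "0 < \<sigma>" using s by (simp add: \<sigma>_def)
  have co3: "0 \<le> \<alpha>" "0 \<le> \<beta>" "0 \<le> \<gamma>"
    using h sp by (simp_all add: \<alpha>_def \<beta>_def \<gamma>_def)
  have "\<alpha> + \<beta> + \<gamma> = (crs (b-x) (c-x) + crs (c-x) (a-x) + crs (a-x) (b-x)) / \<sigma>"
    by (simp add: \<alpha>_def \<beta>_def \<gamma>_def add_divide_distrib)
  also have "crs (b-x) (c-x) + crs (c-x) (a-x) + crs (a-x) (b-x) = \<sigma>" unfolding \<sigma>_def by linarith
  finally have "\<alpha> + \<beta> + \<gamma> = 1" using sp by simp
  note co = co3 this
  have id: "crs (b-x) (c-x) *\<^sub>R (a-x) + crs (c-x) (a-x) *\<^sub>R (b-x) + crs (a-x) (b-x) *\<^sub>R (c-x) = 0"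
    by (rule crs_ident)
  have "x = \<alpha> *\<^sub>R a + \<beta> *\<^sub>R b + \<gamma> *\<^sub>R c"
  proof -
    have "\<sigma> *\<^sub>R x = crs (b-x) (c-x) *\<^sub>R a + crs (c-x) (a-x) *\<^sub>R b + crs (a-x) (b-x) *\<^sub>R c"
      using id by (simp add: \<sigma>_def algebra_simps)
    moreover have "x = (1/\<sigma>) *\<^sub>R (\<sigma> *\<^sub>R x)" using sp by simp
    ultimately have "x = (1/\<sigma>) *\<^sub>R (crs (b-x) (c-x) *\<^sub>R a + crs (c-x) (a-x) *\<^sub>R b + crs (a-x) (b-x) *\<^sub>R c)"
      by simp
    thus ?thesis by (simp add: \<alpha>_def \<beta>_def \<gamma>_def scaleR_add_right)
  qed
  thus ?thesis using co unfolding convex_hull_3 by blast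
qed

lemma no_src:
  fixes a b c x :: "real^2"
  assumes hx: "x \<in> convex hull {a,b,c}" and p: "0 < crs (a-x) (b-x)" "0 < crs (a-x) (c-x)"
  shows False
proof -
  obtain \<alpha> \<beta> \<gamma> where co: "0 \<le> \<alpha>" "0 \<le> \<beta>" "0 \<le> \<gamma>" "\<alpha> + \<beta> + \<gamma> = 1"
    and x: "x = \<alpha> *\<^sub>R a + \<beta> *\<^sub>R b + \<gamma> *\<^sub>R c"
    using hx unfolding convex_hull_3 by blast
  have "\<alpha> *\<^sub>R (a - x) + \<beta> *\<^sub>R (b - x) + \<gamma> *\<^sub>R (c - x) = x - (\<alpha> + \<beta> + \<gamma>) *\<^sub>R x"
    using x by (simp add: algebra_simps)
  also have "\<dots> = 0" using co(4) by simp
  finally have z: "\<alpha> *\<^sub>R (a - x) + \<beta> *\<^sub>R (b - x) + \<gamma> *\<^sub>R (c - x) = 0" .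
  have "crs (a - x) (\<alpha> *\<^sub>R (a - x) + \<beta> *\<^sub>R (b - x) + \<gamma> *\<^sub>R (c - x)) = 0" unfolding z by simp
  hence e: "\<beta> * crs (a-x) (b-x) + \<gamma> * crs (a-x) (c-x) = 0" by simp
  have "0 \<le> \<beta> * crs (a-x) (b-x)" "0 \<le> \<gamma> * crs (a-x) (c-x)" using co p by simp_all
  hence "\<beta> * crs (a-x) (b-x) = 0" "\<gamma> * crs (a-x) (c-x) = 0" using e by linarith+
  hence "\<beta> = 0" "\<gamma> = 0" using p by simp_all
  hence "\<alpha> = 1" using co by simp
  hence "x = a" using x \<open>\<beta> = 0\<close> \<open>\<gamma> = 0\<close> by simp
  thus False using p by (simp add: crs_def)
qed


lemma range_line: assumes "dd \<noteq> 0" shows "range (\<lambda>t. x + t *\<^sub>R dd) = {v. crs dd (v - x) = 0}"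
proof
  show "range (\<lambda>t. x + t *\<^sub>R dd) \<subseteq> {v. crs dd (v - x) = 0}" by auto
  show "{v. crs dd (v - x) = 0} \<subseteq> range (\<lambda>t. x + t *\<^sub>R dd)"
  proof
    fix v assume "v \<in> {v. crs dd (v - x) = 0}"
    then obtain t where "v - x = t *\<^sub>R dd" using crs_par[OF assms] by auto
    hence "v = x + t *\<^sub>R dd" by (simp add: algebra_simps)
    thus "v \<in> range (\<lambda>t. x + t *\<^sub>R dd)" by blast
  qed
qed

theorem lemma16:
  fixes x :: "real^2" and L :: "(real^2) set set" and P :: "(real^2) set" and m :: nat
  assumes "m \<ge> 1"
    and "finite L" and "card L = m"
    and "\<forall>l\<in>L. line_through x l"
    and "P \<subseteq> - (\<Union>L)"
    and "\<forall>C\<in>components (- (\<Union>L)). card (P \<inter> C) = 1"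
  shows "real (card (triangles_containing P x)) \<ge> real ((m + 1) * m * (m - 1)) / 3
    \<and> ((\<forall>p\<in>P. \<forall>q\<in>P. p \<noteq> q \<longrightarrow> \<not> collinear {x, p, q})
        \<longrightarrow> real (card (triangles_containing P x)) = real ((m + 1) * m * (m - 1)) / 3)"
proof -
  note m1 = assms(1) and finL = assms(2) and cardL = assms(3)
  define d where "d l = (SOME dd. dd \<noteq> 0 \<and> l = range (\<lambda>t. x + t *\<^sub>R dd))" for l
  have dprop: "d l \<noteq> 0 \<and> l = range (\<lambda>t. x + t *\<^sub>R d l)" if "l \<in> L" for l
  proof -
    have "line_through x l" using assms(4) that by (rule bspec)
    hence "\<exists>dd. dd \<noteq> 0 \<and> l = range (\<lambda>t. x + t *\<^sub>R dd)" unfolding line_through_def .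
    from someI_ex[OF this] show ?thesis unfolding d_def .
  qed
  have Lne: "L \<noteq> {}" using m1 cardL by auto
  interpret A: arr x L d
  proof (unfold_locales)
    show "finite L" by (rule finL)
    show "L \<noteq> {}" by (rule Lne)
    show "d l \<noteq> 0" if "l \<in> L" for l using dprop[OF that] by blast
    show "l = {v. crs (d l) (v - x) = 0}" if l: "l \<in> L" for l
    proof -
      have "l = range (\<lambda>t. x + t *\<^sub>R d l)" using dprop[OF l] by (rule conjunct2)
      also have "\<dots> = {v. crs (d l) (v - x) = 0}" using dprop[OF l] range_line[of "d l" x] by blast
      finally show ?thesis .
    qed
  qed
  have "A.S \<noteq> {}"
  proof
    assume "A.S = {}"
    hence U: "\<Union>L = UNIV" using A.S_compl by auto
    have "negligible l" if l: "l \<in> L" for l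
    proof -
      have e: "(crs (d l) (v - x) = 0) = (rot (d l) \<bullet> v = rot (d l) \<bullet> x)" for v
        using A.crs_inner_x[of "d l" v] by simp
      have "l = {v. rot (d l) \<bullet> v = rot (d l) \<bullet> x}"
        using A.lineq[OF l] e by blast
      moreover have "rot (d l) \<noteq> 0" using rot_nz A.dnz[OF l] by blast
      ultimately show ?thesis using negligible_hyperplane[of "rot (d l)" "rot (d l) \<bullet> x"] by simp
    qed
    hence "negligible (\<Union>L)" using finL by blast
    thus False using U by simp
  qed
  then obtain v0 where v0: "v0 \<in> A.S" by blast
  have N: "card (A.sg ` A.S) = 2 * m" using A.N_card[OF A.adm_S[OF v0]] cardL by simp
  have PS: "P \<subseteq> A.S" using assms(5) A.S_compl by simp
  have PC: "\<forall>C\<in>components A.S. card (P \<inter> C) = 1" using assms(6) A.S_compl by simp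
  have bij: "bij_betw A.sg P (A.sg ` A.S)" by (rule A.P_bij[OF PS PC])
  have cardP: "card P = 2 * m" using bij_betw_same_card[OF bij] N by simp
  have "0 < card P" using cardP m1 by simp
  hence finP: "finite P" by (rule card_ge_0_finite)
  define D where "D p q = crs (p - x) (q - x)" for p q
  have Dswap: "D q p = - D p q" for p q unfolding D_def by (rule crs_swap)
  have Dself: "D p p = 0" for p unfolding D_def by simp
  have pos: "m - 1 \<le> card {q\<in>P. 0 < D p q}" if "p \<in> P" for p
    using A.deg[OF A.adm_S PS bij, of p] that PS cardL unfolding D_def by auto
  have neg: "m - 1 \<le> card {q\<in>P. D p q < 0}" if p: "p \<in> P" for p
  proof -
    have ad: "A.adm (- (p - x))" using A.adm_neg[OF A.adm_S] p PS by auto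
    have cn: "crs (- (p - x)) (q - x) = - D p q" for q unfolding D_def by (rule crs_neg1)
    have "{q\<in>P. 0 < crs (- (p - x)) (q - x)} = {q\<in>P. D p q < 0}" unfolding cn by auto
    thus ?thesis using A.deg[OF ad PS bij] cardL by simp
  qed
  obtain r :: "real^2 \<Rightarrow> nat" where r: "inj_on r P"
    using finite_imp_inj_to_nat_seg[OF finP] by blast
  define R where "R p q \<longleftrightarrow> 0 < D p q \<or> (D p q = 0 \<and> r p < r q)" for p q
  have tour: "R p q \<longleftrightarrow> \<not> R q p" if "p \<in> P" "q \<in> P" "p \<noteq> q" for p q
  proof -
    have "r p \<noteq> r q" using r that unfolding inj_on_def by blast
    thus ?thesis unfolding R_def using Dswap[of p q] by auto
  qed
  have tour1: "R p q \<or> R q p" if "p \<in> P" "q \<in> P" "p \<noteq> q" for p q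
    using tour[OF that] by blast
  have tour2: "\<not> (R p q \<and> R q p)" if "p \<in> P" "q \<in> P" "p \<noteq> q" for p q
    using tour[OF that] by blast
  define dg where "dg p = card {q\<in>P. q \<noteq> p \<and> R p q}" for p
  define ig where "ig p = card {q\<in>P. q \<noteq> p \<and> R q p}" for p
  have dgig: "dg p + ig p = 2 * m - 1" if p: "p \<in> P" for p
  proof -
    have "{q\<in>P. q \<noteq> p \<and> R p q} \<union> {q\<in>P. q \<noteq> p \<and> R q p} = P - {p}"
      using tour1 p by blast
    moreover have "{q\<in>P. q \<noteq> p \<and> R p q} \<inter> {q\<in>P. q \<noteq> p \<and> R q p} = {}"
      using tour2 p by blast
    ultimately have "dg p + ig p = card (P - {p})" unfolding dg_def ig_def
      using card_Un_disjoint[of "{q\<in>P. q \<noteq> p \<and> R p q}" "{q\<in>P. q \<noteq> p \<and> R q p}"] finP by simp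
    thus ?thesis using cardP p finP by simp
  qed
  have dglo: "m - 1 \<le> dg p" if p: "p \<in> P" for p
  proof -
    have "{q\<in>P. 0 < D p q} \<subseteq> {q\<in>P. q \<noteq> p \<and> R p q}" unfolding R_def using Dself[of p] by auto
    hence "card {q\<in>P. 0 < D p q} \<le> dg p" unfolding dg_def by (rule card_mono[rotated]) (simp add: finP)
    thus ?thesis using pos[OF p] by simp
  qed
  have iglo: "m - 1 \<le> ig p" if p: "p \<in> P" for p
  proof -
    have "{q\<in>P. D p q < 0} \<subseteq> {q\<in>P. q \<noteq> p \<and> R q p}"
    proof
      fix q assume "q \<in> {q\<in>P. D p q < 0}"
      hence q: "q \<in> P" "D p q < 0" by auto
      hence "0 < D q p" using Dswap[of p q] by simp
      moreover have "q \<noteq> p" using q Dself[of p] by auto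
      ultimately show "q \<in> {q\<in>P. q \<noteq> p \<and> R q p}" using q unfolding R_def by simp
    qed
    hence "card {q\<in>P. D p q < 0} \<le> ig p" unfolding ig_def by (rule card_mono[rotated]) (simp add: finP)
    thus ?thesis using neg[OF p] by simp
  qed
  have dgv: "dg p = m - 1 \<or> dg p = m" if p: "p \<in> P" for p
    using dgig[OF p] dglo[OF p] iglo[OF p] m1 by linarith
  have sumdg: "2 * (\<Sum>p\<in>P. dg p) = 2 * m * (2 * m - 1)"
  proof -
    define SO where "SO = (SIGMA p:P. {q\<in>P. q \<noteq> p \<and> R p q})"
    define SI where "SI = (SIGMA p:P. {q\<in>P. q \<noteq> p \<and> R q p})"
    have "(\<Sum>p\<in>P. dg p) = card SO" unfolding SO_def dg_def using finP by (simp add: card_SigmaI)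
    moreover have "(\<Sum>p\<in>P. ig p) = card SI" unfolding SI_def ig_def using finP by (simp add: card_SigmaI)
    moreover have "SI = prod.swap ` SO" unfolding SI_def SO_def by force
    hence "card SI = card SO" by (simp add: card_image)
    moreover have "(\<Sum>p\<in>P. dg p + ig p) = (\<Sum>p\<in>P. 2 * m - 1)" using dgig by simp
    hence "(\<Sum>p\<in>P. dg p) + (\<Sum>p\<in>P. ig p) = 2 * m * (2 * m - 1)" using cardP by (simp add: sum.distrib)
    ultimately show ?thesis by linarith
  qed
  define Cyc where "Cyc = {T. T \<subseteq> P \<and> card T = 3 \<and> \<not>(\<exists>s\<in>T. \<forall>q\<in>T-{s}. R s q)}"
  have tc: "card P choose 3 = card Cyc + (\<Sum>p\<in>P. dg p choose 2)"
    unfolding Cyc_def dg_def by (rule tournament_count[OF finP tour])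
  have rm: "real (m - 1) = real m - 1" using m1 by simp
  have ch: "real (dg p choose 2) = (real m - 1) / 2 * (2 * real (dg p) - real m)" if "p \<in> P" for p
    using dgv[OF that] choose2_real[of "dg p"] rm by (auto simp: field_simps)
  have "real (\<Sum>p\<in>P. dg p choose 2) = (\<Sum>p\<in>P. (real m - 1) / 2 * (2 * real (dg p) - real m))"
    unfolding of_nat_sum by (rule sum.cong[OF refl]) (rule ch)
  also have "\<dots> = (real m - 1) / 2 * (\<Sum>p\<in>P. (2 * real (dg p) - real m))"
    by (rule sum_distrib_left[symmetric])
  also have "(\<Sum>p\<in>P. (2 * real (dg p) - real m)) = 2 * (\<Sum>p\<in>P. real (dg p)) - real (card P) * real m"
    by (simp add: sum_subtractf sum_distrib_left)
  also have "2 * (\<Sum>p\<in>P. real (dg p)) = 2 * real m * (2 * real m - 1)"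
  proof -
    have "real (2 * (\<Sum>p\<in>P. dg p)) = real (2 * m * (2 * m - 1))" using sumdg by simp
    thus ?thesis using m1 by (simp add: of_nat_sum of_nat_diff)
  qed
  finally have sch: "real (\<Sum>p\<in>P. dg p choose 2) = (real m - 1) * real m * (real m - 1)"
    using cardP by (simp add: field_simps)
  have cardCyc: "real (card Cyc) = real ((m + 1) * m * (m - 1)) / 3"
  proof -
    have "real (card Cyc) = real (card P choose 3) - real (\<Sum>p\<in>P. dg p choose 2)" using tc by simp
    also have "\<dots> = 2 * real m * (2 * real m - 1) * (2 * real m - 2) / 6 - (real m - 1) * real m * (real m - 1)"
    proof -
      have "real (card P choose 3) = 2 * real m * (2 * real m - 1) * (2 * real m - 2) / 6"
        using choose3_real[of "2*m"] cardP by simp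
      thus ?thesis using sch by simp
    qed
    also have "\<dots> = real ((m + 1) * m * (m - 1)) / 3" using rm by (simp add: field_simps)
    finally show ?thesis .
  qed
  have cyc_hull: "x \<in> convex hull {a,b,c}" if abc: "a \<in> P" "b \<in> P" "c \<in> P" "a \<noteq> b" "b \<noteq> c" "a \<noteq> c"
    and Rs: "R a b" "R b c" "R c a" for a b c
  proof -
    have nn: "0 \<le> D a b" "0 \<le> D b c" "0 \<le> D c a" using Rs unfolding R_def by auto
    have "0 < D a b + D b c + D c a"
    proof (rule ccontr)
      assume "\<not> 0 < D a b + D b c + D c a"
      hence "D a b = 0" "D b c = 0" "D c a = 0" using nn by linarith+
      hence "r a < r b" "r b < r c" "r c < r a" using Rs unfolding R_def by auto
      thus False by simp
    qed
    thus ?thesis using hull_from_crs nn unfolding D_def by blast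
  qed
  have CycT: "Cyc \<subseteq> triangles_containing P x"
  proof
    fix T assume T: "T \<in> Cyc"
    hence TP: "T \<subseteq> P" "card T = 3" and ns: "\<not>(\<exists>s\<in>T. \<forall>q\<in>T-{s}. R s q)" unfolding Cyc_def by auto
    have "\<exists>a b c. T = {a,b,c} \<and> a \<noteq> b \<and> b \<noteq> c \<and> a \<noteq> c" using TP(2) by (simp only: card_3_iff)
    then obtain a b c where abc: "T = {a,b,c}" "a \<noteq> b" "b \<noteq> c" "a \<noteq> c" by blast
    have inP: "a \<in> P" "b \<in> P" "c \<in> P" using TP(1) abc(1) by blast+
    have nsrc: "\<not> (R s q1 \<and> R s q2)" if "T = {s, q1, q2}" for s q1 q2
    proof
      assume h: "R s q1 \<and> R s q2"
      have "\<forall>q\<in>T-{s}. R s q" using h that by blast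
      moreover have "s \<in> T" using that by blast
      ultimately show False using ns by blast
    qed
    have na: "\<not>(R a b \<and> R a c)" using nsrc[of a b c] abc(1) by blast
    have nb: "\<not>(R b a \<and> R b c)" using nsrc[of b a c] abc(1) by (simp add: insert_commute)
    have nc: "\<not>(R c a \<and> R c b)" using nsrc[of c a b] abc(1) by (simp add: insert_commute)
    have "x \<in> convex hull T"
    proof (cases "R a b")
      case True
      hence "R c a" using na tour1[of a c] inP abc by blast
      hence "R b c" using nc tour1[of b c] inP abc by blast
      have "x \<in> convex hull {a,b,c}" by (rule cyc_hull[OF inP abc(2-4) \<open>R a b\<close> \<open>R b c\<close> \<open>R c a\<close>])
      thus ?thesis using abc(1) by simp
    next
      case False
      hence "R b a" using tour1[of a b] inP abc by blast
      hence "R c b" using nb tour1[of b c] inP abc by blast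
      hence "R a c" using nc tour1[of a c] inP abc by blast
      have "a \<noteq> c" "c \<noteq> b" "a \<noteq> b" using abc by auto
      hence "x \<in> convex hull {a,c,b}"
        by (rule cyc_hull[OF inP(1,3,2) _ _ _ \<open>R a c\<close> \<open>R c b\<close> \<open>R b a\<close>])
      thus ?thesis using abc by (simp add: insert_commute)
    qed
    thus "T \<in> triangles_containing P x" using TP unfolding triangles_containing_def by blast
  qed
  have finTri: "finite (triangles_containing P x)"
    by (rule finite_subset[of _ "Pow P"]) (auto simp: triangles_containing_def finP)
  have part1: "real (card (triangles_containing P x)) \<ge> real ((m + 1) * m * (m - 1)) / 3"
    using card_mono[OF finTri CycT] cardCyc by simp
  have part2: "real (card (triangles_containing P x)) = real ((m + 1) * m * (m - 1)) / 3"
    if gp: "\<forall>p\<in>P. \<forall>q\<in>P. p \<noteq> q \<longrightarrow> \<not> collinear {x, p, q}"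
  proof -
    have Dnz: "D p q \<noteq> 0" if pq: "p \<in> P" "q \<in> P" "p \<noteq> q" for p q
    proof
      assume D0: "D p q = 0"
      have px: "p - x \<noteq> 0" using A.adm_nz[OF A.adm_S] pq PS by auto
      obtain t where "q - x = t *\<^sub>R (p - x)" using crs_par[OF px] D0 unfolding D_def by blast
      hence "collinear {0, p - x, q - x}" by (auto simp: collinear_lemma)
      hence "collinear {p, x, q}" using collinear_3[of p x q] by simp
      hence "collinear {x, p, q}" by (simp add: insert_commute)
      thus False using gp pq by blast
    qed
    have "triangles_containing P x \<subseteq> Cyc"
    proof
      fix T assume T: "T \<in> triangles_containing P x"
      hence TP: "T \<subseteq> P" "card T = 3" "x \<in> convex hull T" unfolding triangles_containing_def by auto
      have "\<not>(\<exists>s\<in>T. \<forall>q\<in>T-{s}. R s q)"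
      proof
        assume "\<exists>s\<in>T. \<forall>q\<in>T-{s}. R s q"
        then obtain s where s: "s \<in> T" "\<forall>q\<in>T-{s}. R s q" by blast
        have "card (T - {s}) = 2" using TP(2) s(1) by simp
        hence "\<exists>q1 q2. T - {s} = {q1, q2} \<and> q1 \<noteq> q2" by (simp only: card_2_iff)
        then obtain q1 q2 where q: "T - {s} = {q1, q2}" "q1 \<noteq> q2" by blast
        have TT: "T = {s, q1, q2}" using q s(1) by blast
        have inP: "s \<in> P" "q1 \<in> P" "q2 \<in> P" using TT TP(1) by auto
        have ne: "s \<noteq> q1" "s \<noteq> q2" using q by blast+
        have "R s q1" "R s q2" using s q by auto
        hence "0 < D s q1" "0 < D s q2" using Dnz inP ne unfolding R_def by auto
        moreover have "x \<in> convex hull {s, q1, q2}" using TP(3) TT by simp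
        ultimately show False using no_src[of x s q1 q2] unfolding D_def by blast
      qed
      thus "T \<in> Cyc" using TP unfolding Cyc_def by blast
    qed
    hence "triangles_containing P x = Cyc" using CycT by blast
    thus ?thesis using cardCyc by simp
  qed
  show ?thesis using part1 part2 by blast
qed


end
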